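(* In the single-block Spice setting, suppose that for every $k\ge1$ the scaling factor satisfies $$\eta_k\ \ge\ \max\Big\{\eta_{k-1}\sqrt{\tfrac{\mathsf{R}(x^k)}{\mathsf{R}(x^{k-1})}},\ \ \eta_{k-1}\,\tfrac{\mathsf{R}(\bar x^k)\sqrt{\mathsf{R}(x^{k-1})}}{\mathsf{R}(\bar x^{k-1})\sqrt{\mathsf{R}(x^k)}}\Big\}.$$ Then (i) $r_k\le r_{k-1}$, $s_k\le s_{k-1}$, hence $H_k\preceq H_{k-1}$ for all $k\ge1$; and (ii) if $w^*\in\Omega$ satisfies $\rho[f(x)-f(x^* )]+(w-w^* )^\top\frac{1}{\eta_j}\Gamma(w^* )\ge0$ for all $w\in\Omega$ and all $j=0,\dots,k$, then $\|w^{k+1}-w^*\|_{H_{k+1}}^2\le\|w^0-w^*\|_{H_0}^2$.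
   Context: Single-block Spice setting. Let $\mathcal{X}\subseteq\mathbb{R}^n$ be nonempty closed convex, $f:\mathbb{R}^n\to\mathbb{R}$ convex, $\phi_1,\dots,\phi_p:\mathbb{R}^n\to\mathbb{R}$ convex and continuously differentiable, $\Phi(x)=(\phi_1(x),\dots,\phi_p(x))^\top$, $\mathcal{D}\Phi(x)\in\mathbb{R}^{p\times n}$ its Jacobian. Let $\mathcal{Z}=\mathbb{R}^p_+$, $\Omega=\mathcal{X}\times\mathcal{Z}$, $w=(x,\lambda)$, $\Gamma(w)=(\mathcal{D}\Phi(x)^\top\lambda,\,-\Phi(x))$. For a symmetric matrix $A$, $\|v\|_A^2:=v^\top A v$; the norm of a matrix is the spectral norm; $\mathsf{R}(x):=\|\mathcal{D}\Phi(x)\|^2$. The scaled Lagrangian is $\mathcal{L}(x,\lambda,\rho,\eta)=\rho f(x)+\frac1\eta\lambda^\top\Phi(x)$. Fix $\rho>0$, $\mu>1$, a starting point $w^0=(x^0,\lambda^0)\in\Omega$ and positive numbers $\eta_0,\eta_1,\dots$. Given $w^k=(x^k,\lambda^k)\in\Omega$, iteration $k$ is: $r_k=\frac{1}{\eta_k}\sqrt{\mathsf{R}(x^k)}$; $\bar x^k=\arg\min_{x\in\mathcal{X}}\{\mathcal{L}(x,\lambda^k,\rho,\eta_k)+\frac{r_k}{2}\|x-x^k\|^2\}$; $s_k=\frac{\mu\,\mathsf{R}(\bar x^k)}{\eta_k\sqrt{\mathsf{R}(x^k)}}$; $\bar\lambda^k=\arg\max_{\lambda\in\mathcal{Z}}\{\mathcal{L}(\bar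 x^k,\lambda,\rho,\eta_k)-\frac{s_k}{2}\|\lambda-\lambda^k\|^2\}$ (equivalently $\bar\lambda^k=\max\{\lambda^k+\frac{1}{\eta_k s_k}\Phi(\bar x^k),0\}$ componentwise); $\bar w^k=(\bar x^k,\bar\lambda^k)$; and $w^{k+1}=w^k-M_k(w^k-\bar w^k)$ where $M_k=\begin{pmatrix}I_n & -\frac{1}{\eta_k r_k}\mathcal{D}\Phi(\bar x^k)^\top\\ 0 & I_p\end{pmatrix}$. It is assumed throughout that $\mathsf{R}(x^k)>0$ and $\mathsf{R}(\bar x^k)>0$ for all $k$. Define $Q_k=\begin{pmatrix} r_kI_n & -\frac{1}{\eta_k}\mathcal{D}\Phi(\bar x^k)^\top\\ 0 & s_kI_p\end{pmatrix}$, $H_k=\begin{pmatrix} r_kI_n&0\\0&s_kI_p\end{pmatrix}$, $G_k=\begin{pmatrix} r_kI_n&0\\0&s_kI_p-\frac{1}{\eta_k^2r_k}\mathcal{D}\Phi(\bar x^k)\mathcal{D}\Phi(\bar x^k)^\top\end{pmatrix}$. *)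

theory Defs
  imports "HOL-Analysis.Analysis"
begin

definition spec_norm :: "real^'n^'m \<Rightarrow> real" where
  "spec_norm A = onorm (\<lambda>v. A *v v)"

text \<open>R(x) = ||D Phi(x)||^2, with J the Jacobian map.\<close>
definition spiceR :: "(real^'n \<Rightarrow> real^'n^'p) \<Rightarrow> real^'n \<Rightarrow> real" where
  "spiceR J x = (spec_norm (J x))\<^sup>2"

definition spiceL :: "(real^'n \<Rightarrow> real) \<Rightarrow> (real^'n \<Rightarrow> real^'p)
    \<Rightarrow> real^'n \<Rightarrow> real^'p \<Rightarrow> real \<Rightarrow> real \<Rightarrow> real" where
  "spiceL f \<Phi> x l \<rho> \<eta> = \<rho> * f x + (1 / \<eta>) * (l \<bullet> \<Phi> x)"

definition nonneg_orthant :: "(real^'p) set" where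
  "nonneg_orthant = {l. \<forall>i. 0 \<le> l $ i}"

text \<open>||(u,v)||_H^2 for H = diag(r I_n, s I_p).\<close>
definition Hnorm2 :: "real \<Rightarrow> real \<Rightarrow> real^'n \<Rightarrow> real^'p \<Rightarrow> real" where
  "Hnorm2 r s u v = r * (norm u)\<^sup>2 + s * (norm v)\<^sup>2"

end

theory Submission
  imports Defs
begin

lemma trick:
  fixes c e :: real
  assumes e: "e \<ge> 0" and h: "\<And>t. 0 < t \<Longrightarrow> t \<le> 1 \<Longrightarrow> 0 \<le> c + t * e"
  shows "0 \<le> c"
proof (rule ccontr)
  assume c: "\<not> 0 \<le> c"
  show False
  proof (cases "e = 0")
    case True then show False using h[of 1] c by simp
  next
    case False
    hence ep: "e > 0" using e by simp
    define t where "t = min 1 (-c/(2*e))"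
    have "-c/(2*e) > 0" using c ep by (intro divide_pos_pos) auto
    hence t0: "0 < t" by (simp add: t_def)
    have t1: "t \<le> 1" by (simp add: t_def)
    have "t * e \<le> (-c/(2*e)) * e" using ep by (intro mult_right_mono) (auto simp: t_def)
    also have "\<dots> = -c/2" using ep by (simp add: field_simps)
    finally show False using h[OF t0 t1] c by linarith
  qed
qed

lemma normsq_add:
  fixes p q :: "'a::real_inner"
  shows "(norm (p + q))\<^sup>2 = (norm p)\<^sup>2 + 2 * (p \<bullet> q) + (norm q)\<^sup>2"
  by (simp add: power2_norm_eq_inner inner_add inner_commute)

lemma dir_deriv:
  fixes g :: "'a::real_normed_vector \<Rightarrow> real"
  assumes d: "(g has_derivative g') (at x)"
  shows "((\<lambda>t. (g (x + t *\<^sub>R h) - g x) / t) \<longlongrightarrow> g' h) (at_right 0)"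
proof -
  have l: "linear g'" using d by (rule has_derivative_linear)
  have 1: "((\<lambda>t::real. x + t *\<^sub>R h) has_derivative (\<lambda>t. t *\<^sub>R h)) (at 0)"
    by (auto intro!: derivative_eq_intros)
  have "((\<lambda>t::real. g (x + t *\<^sub>R h)) has_derivative (\<lambda>t. g' (t *\<^sub>R h))) (at 0)"
    using has_derivative_compose[OF 1, of g g'] d by simp
  hence "((\<lambda>t::real. g (x + t *\<^sub>R h)) has_field_derivative g' h) (at 0)"
    by (rule has_derivative_imp_has_field_derivative) (simp add: linear.scaleR[OF l])
  hence "((\<lambda>t. (g (x + t *\<^sub>R h) - g (x + 0 *\<^sub>R h)) / (t - 0)) \<longlongrightarrow> g' h) (at 0)"
    unfolding has_field_derivative_iff by simp
  hence "((\<lambda>t. (g (x + t *\<^sub>R h) - g x) / t) \<longlongrightarrow> g' h) (at 0)" by simp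
  thus ?thesis by (rule tendsto_mono[OF at_le, rotated]) simp
qed

lemma tangent:
  fixes g :: "'a::real_normed_vector \<Rightarrow> real"
  assumes c: "convex_on UNIV g" and d: "(g has_derivative g') (at x)"
  shows "g x + g' (y - x) \<le> g y"
proof -
  have lim: "((\<lambda>t. (g (x + t *\<^sub>R (y - x)) - g x) / t) \<longlongrightarrow> g' (y - x)) (at_right 0)"
    by (rule dir_deriv[OF d])
  have ev: "\<forall>\<^sub>F t in at_right 0. (g (x + t *\<^sub>R (y - x)) - g x) / t \<le> g y - g x"
    unfolding eventually_at_right_field
  proof (intro exI[of _ 1] conjI allI impI)
    fix t :: real assume t0: "0 < t" and t1: "t < 1"
    hence t: "0 < t \<and> t < 1" by simp
    have "g ((1 - t) *\<^sub>R x + t *\<^sub>R y) \<le> (1 - t) * g x + t * g y"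
      using t by (intro convex_onD[OF c]) auto
    moreover have "(1 - t) *\<^sub>R x + t *\<^sub>R y = x + t *\<^sub>R (y - x)" by (simp add: algebra_simps)
    ultimately have "g (x + t *\<^sub>R (y - x)) - g x \<le> t * (g y - g x)" by (simp add: algebra_simps)
    thus "(g (x + t *\<^sub>R (y - x)) - g x) / t \<le> g y - g x" using t by (simp add: divide_le_eq mult.commute)
  qed simp
  have "g' (y - x) \<le> g y - g x"
    by (rule tendsto_upperbound[OF lim ev]) simp
  thus ?thesis by simp
qed

lemma tangent_vec:
  fixes \<Phi> :: "real^'n \<Rightarrow> real^'p" and D :: "real^'n^'p"
  assumes c: "\<forall>i. convex_on UNIV (\<lambda>y. \<Phi> y $ i)"
    and d: "(\<Phi> has_derivative (\<lambda>h. D *v h)) (at x)"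
    and l: "l \<in> nonneg_orthant"
  shows "l \<bullet> (D *v (y - x)) \<le> l \<bullet> (\<Phi> y - \<Phi> x)"
proof -
  have "\<And>i. (D *v (y - x)) $ i \<le> (\<Phi> y - \<Phi> x) $ i"
  proof -
    fix i
    have "((\<lambda>y. \<Phi> y $ i) has_derivative (\<lambda>h. (D *v h) $ i)) (at x)"
      using bounded_linear.has_derivative[OF bounded_linear_vec_nth d] .
    from tangent[OF c[rule_format, of i] this, of y] show "(D *v (y - x)) $ i \<le> (\<Phi> y - \<Phi> x) $ i"
      by simp
  qed
  moreover have "\<And>i. 0 \<le> l $ i" using l by (simp add: nonneg_orthant_def)
  ultimately show ?thesis unfolding inner_vec_def
    by (intro sum_mono) (simp add: mult_left_mono)
qed

lemma transpose_bound:
  fixes D :: "real^'n^'p"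
  shows "norm (transpose D *v u) \<le> spec_norm D * norm u"
proof -
  let ?v = "transpose D *v u"
  have bl: "bounded_linear (\<lambda>v. D *v v)" by simp
  have "(norm ?v)\<^sup>2 = ?v \<bullet> ?v" by (simp add: power2_norm_eq_inner)
  also have "\<dots> = u \<bullet> (D *v ?v)" by (simp add: dot_lmul_matrix)
  also have "\<dots> \<le> norm u * norm (D *v ?v)" by (rule norm_cauchy_schwarz)
  also have "\<dots> \<le> norm u * (spec_norm D * norm ?v)"
    unfolding spec_norm_def by (intro mult_left_mono onorm[OF bl]) auto
  finally have *: "(norm ?v)\<^sup>2 \<le> spec_norm D * norm u * norm ?v" by (simp add: algebra_simps)
  show ?thesis
  proof (cases "norm ?v = 0")
    case True
    have "0 \<le> spec_norm D" unfolding spec_norm_def by (rule onorm_pos_le[OF bl])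
    then show ?thesis using True by simp
  next
    case False
    hence "norm ?v > 0" by simp
    with * show ?thesis by (simp add: power2_eq_square)
  qed
qed

lemma xopt:
  fixes X :: "(real^'n) set" and f :: "real^'n \<Rightarrow> real" and \<Phi> :: "real^'n \<Rightarrow> real^'p"
    and D :: "real^'n^'p"
  assumes cX: "convex X" and cf: "convex_on UNIV f" and rho: "\<rho> > 0"
    and d\<Phi>: "(\<Phi> has_derivative (\<lambda>h. D *v h)) (at xb)"
    and am: "is_arg_min (\<lambda>y. spiceL f \<Phi> y l \<rho> \<eta> + r / 2 * (norm (y - x))\<^sup>2) (\<lambda>y. y \<in> X) xb"
    and y: "y \<in> X"
  shows "0 \<le> \<rho> * (f y - f xb) + (1 / \<eta>) * (l \<bullet> (D *v (y - xb))) + r * ((xb - x) \<bullet> (y - xb))"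
proof -
  define h where "h = y - xb"
  define g where "g = (\<lambda>z. (1 / \<eta>) * (l \<bullet> \<Phi> z))"
  have gd: "(g has_derivative (\<lambda>h. (1 / \<eta>) * (l \<bullet> (D *v h)))) (at xb)"
    unfolding g_def
    by (rule bounded_linear.has_derivative[OF bounded_linear_mult_right
          bounded_linear.has_derivative[OF bounded_linear_inner_right d\<Phi>]])
  have lim: "((\<lambda>t. (g (xb + t *\<^sub>R h) - g xb) / t) \<longlongrightarrow> (1 / \<eta>) * (l \<bullet> (D *v h))) (at_right 0)"
    using dir_deriv[OF gd] .
  have xbX: "xb \<in> X" using am by (simp add: is_arg_min_def)
  have lim2: "((\<lambda>t. \<rho> * (f y - f xb) + (g (xb + t *\<^sub>R h) - g xb) / t + r * ((xb - x) \<bullet> h)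
        + t * (r / 2 * (norm h)\<^sup>2)) \<longlongrightarrow>
       \<rho> * (f y - f xb) + (1 / \<eta>) * (l \<bullet> (D *v h)) + r * ((xb - x) \<bullet> h) + 0 * (r / 2 * (norm h)\<^sup>2)) (at_right 0)"
    by (intro tendsto_intros lim)
  have ev: "\<forall>\<^sub>F t in at_right 0. 0 \<le> \<rho> * (f y - f xb) + (g (xb + t *\<^sub>R h) - g xb) / t + r * ((xb - x) \<bullet> h)
        + t * (r / 2 * (norm h)\<^sup>2)"
    unfolding eventually_at_right_field
  proof (intro exI[of _ 1] conjI allI impI)
    fix t :: real assume t0: "0 < t" and t1: "t < 1"
    define z where "z = xb + t *\<^sub>R h"
    have zeq: "z = (1 - t) *\<^sub>R xb + t *\<^sub>R y" by (simp add: z_def h_def algebra_simps)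
    have zX: "z \<in> X" unfolding zeq using cX xbX y t0 t1 by (intro convexD) auto
    have fz: "f z \<le> (1 - t) * f xb + t * f y"
      unfolding zeq using t0 t1 by (intro convex_onD[OF cf]) auto
    have fz': "\<rho> * f z \<le> \<rho> * ((1 - t) * f xb + t * f y)"
      using fz rho by (intro mult_left_mono) auto
    have nz: "(norm (z - x))\<^sup>2 = (norm (xb - x))\<^sup>2 + 2 * t * ((xb - x) \<bullet> h) + t * t * (norm h)\<^sup>2"
    proof -
      have "z - x = (xb - x) + t *\<^sub>R h" by (simp add: z_def algebra_simps)
      hence "(norm (z - x))\<^sup>2 = (norm (xb - x))\<^sup>2 + 2 * ((xb - x) \<bullet> (t *\<^sub>R h)) + (norm (t *\<^sub>R h))\<^sup>2"
        using normsq_add by metis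
      thus ?thesis by (simp add: power2_eq_square)
    qed
    have am': "\<rho> * f xb + g xb + r / 2 * (norm (xb - x))\<^sup>2 \<le> \<rho> * f z + g z + r / 2 * (norm (z - x))\<^sup>2"
      using am zX unfolding is_arg_min_def spiceL_def g_def by (auto simp: not_less)
    have key: "0 \<le> t * (\<rho> * (f y - f xb)) + (g z - g xb) + t * (r * ((xb - x) \<bullet> h)) + t * (t * (r / 2 * (norm h)\<^sup>2))"
      using am' fz' unfolding nz by (simp add: algebra_simps)
    have "\<rho> * (f y - f xb) + (g z - g xb) / t + r * ((xb - x) \<bullet> h) + t * (r / 2 * (norm h)\<^sup>2)
       = (t * (\<rho> * (f y - f xb)) + (g z - g xb) + t * (r * ((xb - x) \<bullet> h)) + t * (t * (r / 2 * (norm h)\<^sup>2))) / t"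
      using t0 by (simp add: field_simps)
    also have "\<dots> \<ge> 0" using key t0 by simp
    finally show "0 \<le> \<rho> * (f y - f xb) + (g (xb + t *\<^sub>R h) - g xb) / t + r * ((xb - x) \<bullet> h)
        + t * (r / 2 * (norm h)\<^sup>2)" by (simp add: z_def)
  qed simp
  have "0 \<le> \<rho> * (f y - f xb) + (1 / \<eta>) * (l \<bullet> (D *v h)) + r * ((xb - x) \<bullet> h) + 0 * (r / 2 * (norm h)\<^sup>2)"
    by (rule tendsto_lowerbound[OF lim2 ev]) simp
  thus ?thesis by (simp add: h_def)
qed

lemma lopt:
  fixes f :: "real^'n \<Rightarrow> real" and \<Phi> :: "real^'n \<Rightarrow> real^'p"
  assumes am: "is_arg_max (\<lambda>l. spiceL f \<Phi> xb l \<rho> \<eta> - s / 2 * (norm (l - lam))\<^sup>2)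
          (\<lambda>l. l \<in> nonneg_orthant) lb"
    and s: "s \<ge> 0" and l: "l \<in> nonneg_orthant"
  shows "(1 / \<eta>) * ((l - lb) \<bullet> \<Phi> xb) \<le> s * ((lb - lam) \<bullet> (l - lb))"
proof -
  have lbO: "lb \<in> nonneg_orthant" using am by (simp add: is_arg_max_def)
  have "0 \<le> s * ((lb - lam) \<bullet> (l - lb)) - (1 / \<eta>) * ((l - lb) \<bullet> \<Phi> xb)"
  proof (rule trick)
    show "0 \<le> s / 2 * (norm (l - lb))\<^sup>2" using s by simp
  next
    fix t :: real assume t0: "0 < t" and t1: "t \<le> 1"
    define z where "z = lb + t *\<^sub>R (l - lb)"
    have zO: "z \<in> nonneg_orthant"
      unfolding nonneg_orthant_def
    proof (safe)
      fix i
      have a: "0 \<le> lb $ i" "0 \<le> l $ i" using lbO l by (auto simp: nonneg_orthant_def)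
      have "z $ i = (1 - t) * lb $ i + t * l $ i" by (simp add: z_def algebra_simps)
      also have "\<dots> \<ge> 0" using a t0 t1 by (intro add_nonneg_nonneg mult_nonneg_nonneg) auto
      finally show "0 \<le> z $ i" .
    qed
    have am': "\<rho> * f xb + (1 / \<eta>) * (z \<bullet> \<Phi> xb) - s / 2 * (norm (z - lam))\<^sup>2
        \<le> \<rho> * f xb + (1 / \<eta>) * (lb \<bullet> \<Phi> xb) - s / 2 * (norm (lb - lam))\<^sup>2"
      using am zO unfolding is_arg_max_def spiceL_def by (auto simp: not_less)
    have zi: "z \<bullet> \<Phi> xb = lb \<bullet> \<Phi> xb + t * ((l - lb) \<bullet> \<Phi> xb)" by (simp add: z_def inner_add_left)
    have nz: "(norm (z - lam))\<^sup>2 = (norm (lb - lam))\<^sup>2 + 2 * t * ((lb - lam) \<bullet> (l - lb)) + t * t * (norm (l - lb))\<^sup>2"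
    proof -
      have "z - lam = (lb - lam) + t *\<^sub>R (l - lb)" by (simp add: z_def algebra_simps)
      hence "(norm (z - lam))\<^sup>2 = (norm (lb - lam))\<^sup>2 + 2 * ((lb - lam) \<bullet> (t *\<^sub>R (l - lb))) + (norm (t *\<^sub>R (l - lb)))\<^sup>2"
        using normsq_add by metis
      thus ?thesis by (simp add: power2_eq_square)
    qed
    have "0 \<le> t * (s * ((lb - lam) \<bullet> (l - lb)) - (1 / \<eta>) * ((l - lb) \<bullet> \<Phi> xb)) + t * (t * (s / 2 * (norm (l - lb))\<^sup>2))"
      using am' unfolding zi nz by (simp add: algebra_simps)
    hence "0 \<le> t * (s * ((lb - lam) \<bullet> (l - lb)) - (1 / \<eta>) * ((l - lb) \<bullet> \<Phi> xb) + t * (s / 2 * (norm (l - lb))\<^sup>2))"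
      by (simp add: algebra_simps)
    thus "0 \<le> s * ((lb - lam) \<bullet> (l - lb)) - (1 / \<eta>) * ((l - lb) \<bullet> \<Phi> xb) + t * (s / 2 * (norm (l - lb))\<^sup>2)"
      using t0 by (simp add: zero_le_mult_iff)
  qed
  thus ?thesis by simp
qed

lemma step:
  fixes X :: "(real^'n) set" and f :: "real^'n \<Rightarrow> real" and \<Phi> :: "real^'n \<Rightarrow> real^'p"
    and J :: "real^'n \<Rightarrow> real^'n^'p"
  assumes cX: "convex X" and cf: "convex_on UNIV f"
    and c\<Phi>: "\<forall>i. convex_on UNIV (\<lambda>y. \<Phi> y $ i)"
    and d\<Phi>: "\<forall>y. (\<Phi> has_derivative (\<lambda>h. J y *v h)) (at y)"
    and rho: "\<rho> > 0" and mu: "\<mu> > 1" and eta: "\<eta> > 0"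
    and Rx: "spiceR J x > 0"
    and r: "r = (1 / \<eta>) * sqrt (spiceR J x)"
    and s: "s = \<mu> * spiceR J xb / (\<eta> * sqrt (spiceR J x))"
    and am: "is_arg_min (\<lambda>y. spiceL f \<Phi> y lam \<rho> \<eta> + r / 2 * (norm (y - x))\<^sup>2) (\<lambda>y. y \<in> X) xb"
    and amx: "is_arg_max (\<lambda>l. spiceL f \<Phi> xb l \<rho> \<eta> - s / 2 * (norm (l - lam))\<^sup>2)
          (\<lambda>l. l \<in> nonneg_orthant) lb"
    and xs: "xs \<in> X" and ls: "ls \<in> nonneg_orthant"
    and VI: "\<forall>y\<in>X. \<forall>l\<in>nonneg_orthant.
               \<rho> * (f y - f xs)
               + (y - xs) \<bullet> ((1 / \<eta>) *\<^sub>R (transpose (J xs) *v ls))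
               + (l - ls) \<bullet> ((1 / \<eta>) *\<^sub>R (- \<Phi> xs)) \<ge> 0"
  shows "Hnorm2 r s (xb + (1 / (\<eta> * r)) *\<^sub>R (transpose (J xb) *v (lam - lb)) - xs) (lb - ls)
         \<le> Hnorm2 r s (x - xs) (lam - ls)"
proof -
  define D where "D = J xb"
  define u where "u = lam - lb"
  define a where "a = xb - xs"
  define q where "q = 1 / \<eta>"
  define d where "d = (1 / (\<eta> * r)) *\<^sub>R (transpose D *v u)"
  define P where "P = lam \<bullet> (D *v a)"
  define Pb where "Pb = lb \<bullet> (D *v a)"
  define S where "S = ls \<bullet> (J xs *v a)"
  define F1 where "F1 = lb \<bullet> \<Phi> xs"
  define F2 where "F2 = lb \<bullet> \<Phi> xb"
  define F3 where "F3 = ls \<bullet> \<Phi> xb"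
  define F4 where "F4 = ls \<bullet> \<Phi> xs"
  define G where "G = (x - xb) \<bullet> a"
  define K where "K = u \<bullet> (lb - ls)"
  have sq: "sqrt (spiceR J x) > 0" using Rx by simp
  have rpos: "r > 0" using r eta sq by simp
  have etar: "\<eta> * r = sqrt (spiceR J x)" using r eta by simp
  have Rb: "spiceR J xb \<ge> 0" by (simp add: spiceR_def)
  have spos: "s \<ge> 0" using s mu eta sq Rb by simp
  have q0: "q \<ge> 0" using eta by (simp add: q_def)
  have xbX: "xb \<in> X" using am by (simp add: is_arg_min_def)
  have lbO: "lb \<in> nonneg_orthant" using amx by (simp add: is_arg_max_def)
  have dD: "(\<Phi> has_derivative (\<lambda>h. D *v h)) (at xb)" using d\<Phi> by (simp add: D_def)
  have A0: "0 \<le> \<rho> * (f xs - f xb) + (1 / \<eta>) * (lam \<bullet> (D *v (xs - xb))) + r * ((xb - x) \<bullet> (xs - xb))"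
    by (rule xopt[OF cX cf rho dD am xs])
  have "lam \<bullet> (D *v (xs - xb)) = - P" unfolding P_def a_def
    by (simp add: matrix_vector_mult_diff_distrib inner_diff_right)
  moreover have "(xb - x) \<bullet> (xs - xb) = G" unfolding G_def a_def
    by (metis inner_minus_left inner_minus_right minus_diff_eq)
  ultimately have A: "0 \<le> \<rho> * (f xs - f xb) - q * P + r * G" using A0 by (simp add: q_def)
  have B0: "(1 / \<eta>) * ((ls - lb) \<bullet> \<Phi> xb) \<le> s * ((lb - lam) \<bullet> (ls - lb))"
    by (rule lopt[OF amx spos ls])
  have "(lb - lam) \<bullet> (ls - lb) = K" unfolding K_def u_def
    by (metis inner_minus_left inner_minus_right minus_diff_eq)
  hence B: "q * F3 - q * F2 \<le> s * K" using B0
    by (simp add: q_def F2_def F3_def inner_diff_left algebra_simps)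
  have C0: "0 \<le> \<rho> * (f xb - f xs) + (xb - xs) \<bullet> ((1 / \<eta>) *\<^sub>R (transpose (J xs) *v ls))
               + (lb - ls) \<bullet> ((1 / \<eta>) *\<^sub>R (- \<Phi> xs))"
    using VI xbX lbO by blast
  have "(xb - xs) \<bullet> (transpose (J xs) *v ls) = S"
    unfolding S_def a_def by (metis dot_lmul_matrix inner_commute transpose_matrix_vector)
  hence C: "0 \<le> \<rho> * (f xb - f xs) + q * S - q * F1 + q * F4" using C0
    by (simp add: q_def F1_def F4_def inner_diff_left algebra_simps)
  have T10: "lb \<bullet> (D *v (xs - xb)) \<le> lb \<bullet> (\<Phi> xs - \<Phi> xb)"
    by (rule tangent_vec[OF c\<Phi> dD lbO])
  have "lb \<bullet> (D *v (xs - xb)) = - Pb" unfolding Pb_def a_def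
    by (simp add: matrix_vector_mult_diff_distrib inner_diff_right)
  hence "- Pb \<le> F1 - F2" using T10 by (simp add: F1_def F2_def inner_diff_right)
  hence T1: "- (q * Pb) \<le> q * F1 - q * F2" using q0
    by (metis mult_left_mono mult_minus_right right_diff_distrib)
  have T20: "ls \<bullet> (J xs *v (xb - xs)) \<le> ls \<bullet> (\<Phi> xb - \<Phi> xs)"
    using tangent_vec[OF c\<Phi> d\<Phi>[rule_format, of xs] ls] .
  hence "S \<le> F3 - F4" by (simp add: S_def a_def F3_def F4_def inner_diff_right)
  hence T2: "q * S \<le> q * F3 - q * F4" using q0
    by (metis mult_left_mono right_diff_distrib)
  have ad: "r * (a \<bullet> d) = q * P - q * Pb"
  proof -
    have "a \<bullet> (transpose D *v u) = u \<bullet> (D *v a)" by (metis dot_lmul_matrix inner_commute transpose_matrix_vector)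
    also have "\<dots> = P - Pb" by (simp add: u_def P_def Pb_def inner_diff_left)
    finally have "r * (a \<bullet> d) = r * (1 / (\<eta> * r)) * (P - Pb)" by (simp add: d_def)
    also have "\<dots> = q * P - q * Pb" using rpos eta by (simp add: q_def field_simps)
    finally show ?thesis .
  qed
  have N: "r * (norm d)\<^sup>2 \<le> s * (norm u)\<^sup>2"
  proof -
    have tb: "(norm (transpose D *v u))\<^sup>2 \<le> spiceR J xb * (norm u)\<^sup>2"
    proof -
      have "norm (transpose D *v u) \<le> spec_norm D * norm u" by (rule transpose_bound)
      hence "(norm (transpose D *v u))\<^sup>2 \<le> (spec_norm D * norm u)\<^sup>2" by (intro power_mono) auto
      thus ?thesis by (simp add: spiceR_def D_def power_mult_distrib)
    qed
    have "r * (norm d)\<^sup>2 = (norm (transpose D *v u))\<^sup>2 / (\<eta> * sqrt (spiceR J x))"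
      unfolding d_def using rpos eta etar[symmetric]
      by (simp add: power2_eq_square field_simps)
    also have "\<dots> \<le> spiceR J xb * (norm u)\<^sup>2 / (\<eta> * sqrt (spiceR J x))"
      using tb eta sq by (intro divide_right_mono) auto
    also have "\<dots> \<le> s * (norm u)\<^sup>2"
    proof -
      have "spiceR J xb * (norm u)\<^sup>2 \<le> \<mu> * spiceR J xb * (norm u)\<^sup>2"
        using mu Rb by (intro mult_right_mono) (auto intro: mult_right_mono[of 1 \<mu>, simplified])
      thus ?thesis unfolding s using eta sq by (simp add: divide_right_mono)
    qed
    finally show ?thesis .
  qed
  have E1: "(norm (xb + d - xs))\<^sup>2 = (norm a)\<^sup>2 + 2 * (a \<bullet> d) + (norm d)\<^sup>2"
  proof -
    have "xb + d - xs = a + d" by (simp add: a_def algebra_simps)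
    thus ?thesis using normsq_add by metis
  qed
  have E2: "(norm (x - xs))\<^sup>2 = (norm (x - xb))\<^sup>2 + 2 * G + (norm a)\<^sup>2"
  proof -
    have "x - xs = (x - xb) + a" by (simp add: a_def algebra_simps)
    thus ?thesis using normsq_add unfolding G_def by metis
  qed
  have E3: "(norm (lam - ls))\<^sup>2 = (norm u)\<^sup>2 + 2 * K + (norm (lb - ls))\<^sup>2"
  proof -
    have "lam - ls = u + (lb - ls)" by (simp add: u_def algebra_simps)
    thus ?thesis using normsq_add unfolding K_def by metis
  qed
  have nx: "0 \<le> r * (norm (x - xb))\<^sup>2" using rpos by simp
  have "Hnorm2 r s (xb + d - xs) (lb - ls) \<le> Hnorm2 r s (x - xs) (lam - ls)"
    unfolding Hnorm2_def E1 E2 E3 using A B C T1 T2 ad N nx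
    by (simp add: algebra_simps)
  thus ?thesis by (simp add: d_def D_def u_def)
qed

theorem lemma3p3:
  fixes X :: "(real^'n) set"
    and f :: "real^'n \<Rightarrow> real"
    and \<Phi> :: "real^'n \<Rightarrow> real^'p"
    and J :: "real^'n \<Rightarrow> real^'n^'p"
    and \<rho> \<mu> :: real
    and \<eta> :: "nat \<Rightarrow> real"
    and x xbar :: "nat \<Rightarrow> real^'n"
    and lam lambar :: "nat \<Rightarrow> real^'p"
    and r s :: "nat \<Rightarrow> real"
  assumes X_ne: "X \<noteq> {}" and X_closed: "closed X" and X_convex: "convex X"
    and f_convex: "convex_on UNIV f"
    and \<Phi>_convex: "\<forall>i. convex_on UNIV (\<lambda>y. \<Phi> y $ i)"
    and \<Phi>_deriv: "\<forall>y. (\<Phi> has_derivative (\<lambda>h. J y *v h)) (at y)"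
    and J_cont: "continuous_on UNIV J"
    and \<rho>_pos: "\<rho> > 0" and \<mu>_gt: "\<mu> > 1"
    and \<eta>_pos: "\<forall>k. \<eta> k > 0"
    and x0: "x 0 \<in> X" and lam0: "lam 0 \<in> nonneg_orthant"
    and R_pos: "\<forall>k. spiceR J (x k) > 0" and Rbar_pos: "\<forall>k. spiceR J (xbar k) > 0"
    and r_def: "\<forall>k. r k = (1 / \<eta> k) * sqrt (spiceR J (x k))"
    and xbar_def: "\<forall>k. is_arg_min
          (\<lambda>y. spiceL f \<Phi> y (lam k) \<rho> (\<eta> k) + r k / 2 * (norm (y - x k))\<^sup>2)
          (\<lambda>y. y \<in> X) (xbar k)"
    and s_def: "\<forall>k. s k = \<mu> * spiceR J (xbar k) / (\<eta> k * sqrt (spiceR J (x k)))"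
    and lambar_def: "\<forall>k. is_arg_max
          (\<lambda>l. spiceL f \<Phi> (xbar k) l \<rho> (\<eta> k) - s k / 2 * (norm (l - lam k))\<^sup>2)
          (\<lambda>l. l \<in> nonneg_orthant) (lambar k)"
    and x_upd: "\<forall>k. x (Suc k) = x k - ((x k - xbar k)
          - (1 / (\<eta> k * r k)) *\<^sub>R (transpose (J (xbar k)) *v (lam k - lambar k)))"
    and lam_upd: "\<forall>k. lam (Suc k) = lam k - (lam k - lambar k)"
    and \<eta>_grow: "\<forall>k\<ge>1. \<eta> k \<ge> max
          (\<eta> (k - 1) * sqrt (spiceR J (x k) / spiceR J (x (k - 1))))
          (\<eta> (k - 1) * (spiceR J (xbar k) * sqrt (spiceR J (x (k - 1))))
             / (spiceR J (xbar (k - 1)) * sqrt (spiceR J (x k))))"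
  shows "(\<forall>k\<ge>1. r k \<le> r (k - 1) \<and> s k \<le> s (k - 1)
            \<and> (\<forall>(u::real^'n) (v::real^'p). Hnorm2 (r k) (s k) u v \<le> Hnorm2 (r (k - 1)) (s (k - 1)) u v))
       \<and> (\<forall>k xs ls. xs \<in> X \<and> ls \<in> nonneg_orthant \<and>
            (\<forall>j\<le>k. \<forall>y\<in>X. \<forall>l\<in>nonneg_orthant.
               \<rho> * (f y - f xs)
               + (y - xs) \<bullet> ((1 / \<eta> j) *\<^sub>R (transpose (J xs) *v ls))
               + (l - ls) \<bullet> ((1 / \<eta> j) *\<^sub>R (- \<Phi> xs)) \<ge> 0)
          \<longrightarrow> Hnorm2 (r (Suc k)) (s (Suc k)) (x (Suc k) - xs) (lam (Suc k) - ls)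
              \<le> Hnorm2 (r 0) (s 0) (x 0 - xs) (lam 0 - ls))"
proof -
  have mono: "\<forall>k\<ge>1. r k \<le> r (k - 1) \<and> s k \<le> s (k - 1)
            \<and> (\<forall>(u::real^'n) (v::real^'p). Hnorm2 (r k) (s k) u v \<le> Hnorm2 (r (k - 1)) (s (k - 1)) u v)"
  proof (intro allI impI)
    fix k :: nat assume k: "k \<ge> 1"
    define Rk where "Rk = spiceR J (x k)"
    define Rk1 where "Rk1 = spiceR J (x (k - 1))"
    define Bk where "Bk = spiceR J (xbar k)"
    define Bk1 where "Bk1 = spiceR J (xbar (k - 1))"
    have p: "Rk > 0" "Rk1 > 0" "Bk > 0" "Bk1 > 0" "\<eta> k > 0" "\<eta> (k - 1) > 0"
      using R_pos Rbar_pos \<eta>_pos by (auto simp: Rk_def Rk1_def Bk_def Bk1_def)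
    have sp: "sqrt Rk > 0" "sqrt Rk1 > 0" using p by auto
    have g1: "\<eta> k \<ge> \<eta> (k - 1) * (sqrt Rk / sqrt Rk1)"
      using \<eta>_grow k by (simp add: Rk_def Rk1_def real_sqrt_divide)
    have g2: "\<eta> k \<ge> \<eta> (k - 1) * (Bk * sqrt Rk1) / (Bk1 * sqrt Rk)"
      using \<eta>_grow k by (simp add: Rk_def Rk1_def Bk_def Bk1_def)
    have m1: "\<eta> (k - 1) * (sqrt Rk / sqrt Rk1) > 0" using p sp by simp
    have m2: "\<eta> (k - 1) * (Bk * sqrt Rk1) / (Bk1 * sqrt Rk) > 0" using p sp by simp
    have rk: "r k \<le> r (k - 1)"
    proof -
      have "r k = sqrt Rk / \<eta> k" using r_def by (simp add: Rk_def)
      also have "\<dots> \<le> sqrt Rk / (\<eta> (k - 1) * (sqrt Rk / sqrt Rk1))"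
        using divide_left_mono[OF g1 _ mult_pos_pos[OF p(5) m1], of "sqrt Rk"] sp by (simp only: less_imp_le)
      also have "\<dots> = sqrt Rk1 / \<eta> (k - 1)" using sp p by (simp add: field_simps)
      also have "\<dots> = r (k - 1)" using r_def by (simp add: Rk1_def)
      finally show ?thesis .
    qed
    have sk: "s k \<le> s (k - 1)"
    proof -
      have "s k = \<mu> * Bk / sqrt Rk / \<eta> k" using s_def by (simp add: Bk_def Rk_def field_simps)
      also have "\<dots> \<le> \<mu> * Bk / sqrt Rk / (\<eta> (k - 1) * (Bk * sqrt Rk1) / (Bk1 * sqrt Rk))"
        using divide_left_mono[OF g2 _ mult_pos_pos[OF p(5) m2], of "\<mu> * Bk / sqrt Rk"] sp p \<mu>_gt
        by (meson divide_nonneg_pos less_imp_le mult_nonneg_nonneg order.strict_trans zero_less_one)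
      also have "\<dots> = \<mu> * Bk1 / (\<eta> (k - 1) * sqrt Rk1)" using sp p by (simp add: field_simps)
      also have "\<dots> = s (k - 1)" using s_def by (simp add: Bk1_def Rk1_def)
      finally show ?thesis .
    qed
    have "\<forall>(u::real^'n) (v::real^'p). Hnorm2 (r k) (s k) u v \<le> Hnorm2 (r (k - 1)) (s (k - 1)) u v"
      using rk sk unfolding Hnorm2_def by (auto intro!: add_mono mult_right_mono)
    thus "r k \<le> r (k - 1) \<and> s k \<le> s (k - 1)
            \<and> (\<forall>(u::real^'n) (v::real^'p). Hnorm2 (r k) (s k) u v \<le> Hnorm2 (r (k - 1)) (s (k - 1)) u v)"
      using rk sk by blast
  qed
  have main: "\<And>m xs ls. xs \<in> X \<Longrightarrow> ls \<in> nonneg_orthant \<Longrightarrow>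
            (\<forall>j<m. \<forall>y\<in>X. \<forall>l\<in>nonneg_orthant.
               \<rho> * (f y - f xs)
               + (y - xs) \<bullet> ((1 / \<eta> j) *\<^sub>R (transpose (J xs) *v ls))
               + (l - ls) \<bullet> ((1 / \<eta> j) *\<^sub>R (- \<Phi> xs)) \<ge> 0)
          \<Longrightarrow> Hnorm2 (r m) (s m) (x m - xs) (lam m - ls)
              \<le> Hnorm2 (r 0) (s 0) (x 0 - xs) (lam 0 - ls)"
  proof -
    fix m :: nat and xs :: "real^'n" and ls :: "real^'p"
    assume xs: "xs \<in> X" and ls: "ls \<in> nonneg_orthant"
    show "(\<forall>j<m. \<forall>y\<in>X. \<forall>l\<in>nonneg_orthant.
               \<rho> * (f y - f xs)
               + (y - xs) \<bullet> ((1 / \<eta> j) *\<^sub>R (transpose (J xs) *v ls))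
               + (l - ls) \<bullet> ((1 / \<eta> j) *\<^sub>R (- \<Phi> xs)) \<ge> 0)
          \<Longrightarrow> Hnorm2 (r m) (s m) (x m - xs) (lam m - ls)
              \<le> Hnorm2 (r 0) (s 0) (x 0 - xs) (lam 0 - ls)"
    proof (induction m)
      case 0 then show ?case by simp
    next
      case (Suc m)
      have VI: "\<forall>y\<in>X. \<forall>l\<in>nonneg_orthant.
               \<rho> * (f y - f xs)
               + (y - xs) \<bullet> ((1 / \<eta> m) *\<^sub>R (transpose (J xs) *v ls))
               + (l - ls) \<bullet> ((1 / \<eta> m) *\<^sub>R (- \<Phi> xs)) \<ge> 0"
        using Suc.prems by blast
      have IH: "Hnorm2 (r m) (s m) (x m - xs) (lam m - ls) \<le> Hnorm2 (r 0) (s 0) (x 0 - xs) (lam 0 - ls)"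
        using Suc.IH Suc.prems by auto
      have xS: "x (Suc m) = xbar m + (1 / (\<eta> m * r m)) *\<^sub>R (transpose (J (xbar m)) *v (lam m - lambar m))"
        using x_upd by simp
      have lS: "lam (Suc m) = lambar m" using lam_upd by simp
      have st: "Hnorm2 (r m) (s m) (x (Suc m) - xs) (lam (Suc m) - ls) \<le> Hnorm2 (r m) (s m) (x m - xs) (lam m - ls)"
        unfolding xS lS
        by (rule step[OF X_convex f_convex \<Phi>_convex \<Phi>_deriv \<rho>_pos \<mu>_gt \<eta>_pos[rule_format]
              R_pos[rule_format] r_def[rule_format] s_def[rule_format] xbar_def[rule_format]
              lambar_def[rule_format] xs ls VI])
      have "Hnorm2 (r (Suc m)) (s (Suc m)) (x (Suc m) - xs) (lam (Suc m) - ls)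
            \<le> Hnorm2 (r m) (s m) (x (Suc m) - xs) (lam (Suc m) - ls)"
        using mono[rule_format, of "Suc m"] by simp
      with st IH show ?case by linarith
    qed
  qed
  have "\<forall>k xs ls. xs \<in> X \<and> ls \<in> nonneg_orthant \<and>
            (\<forall>j\<le>k. \<forall>y\<in>X. \<forall>l\<in>nonneg_orthant.
               \<rho> * (f y - f xs)
               + (y - xs) \<bullet> ((1 / \<eta> j) *\<^sub>R (transpose (J xs) *v ls))
               + (l - ls) \<bullet> ((1 / \<eta> j) *\<^sub>R (- \<Phi> xs)) \<ge> 0)
          \<longrightarrow> Hnorm2 (r (Suc k)) (s (Suc k)) (x (Suc k) - xs) (lam (Suc k) - ls)
              \<le> Hnorm2 (r 0) (s 0) (x 0 - xs) (lam 0 - ls)"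
  proof (intro allI impI)
    fix k :: nat and xs :: "real^'n" and ls :: "real^'p"
    assume h: "xs \<in> X \<and> ls \<in> nonneg_orthant \<and>
            (\<forall>j\<le>k. \<forall>y\<in>X. \<forall>l\<in>nonneg_orthant.
               \<rho> * (f y - f xs)
               + (y - xs) \<bullet> ((1 / \<eta> j) *\<^sub>R (transpose (J xs) *v ls))
               + (l - ls) \<bullet> ((1 / \<eta> j) *\<^sub>R (- \<Phi> xs)) \<ge> 0)"
    show "Hnorm2 (r (Suc k)) (s (Suc k)) (x (Suc k) - xs) (lam (Suc k) - ls)
              \<le> Hnorm2 (r 0) (s 0) (x 0 - xs) (lam 0 - ls)"
      using h by (intro main[of xs ls "Suc k"]) (auto simp: less_Suc_eq_le)
  qed
  with mono show ?thesis by blast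
qed

end
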